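(* Let $(\Delta,\mathcal H)$ be a generic cut with associated simplicial complexes $K_\Delta,K_+,K_-$ on $\widetilde{[m]}=[m]\cup\{o\}$, and set $W=K_+\cap K_-$. Let $B$ be an integer $r\times(m+1)$ matrix of rank $r$ (columns indexed by $\widetilde{[m]}$), $u_i=\sum_{j\in\widetilde{[m]}}B_{ij}x_j$, $S=\mathbb Z[u_1,\dots,u_r]\subset\mathbb Z[x_j:j\in\widetilde{[m]}]$, with $\mathbb Z$ an $S$-module via $u_i\mapsto0$. Suppose $\operatorname{Tor}_1^S(\mathbb Z[W],\mathbb Z)=0$. If $\operatorname{Tor}_1^S(\mathbb Z[K_\Delta],\mathbb Z)=0$, then $\operatorname{Tor}_1^S(\mathbb Z[K_+],\mathbb Z)=\operatorname{Tor}_1^S(\mathbb Z[K_-],\mathbb Z)=0$.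
   Context: Let $\Delta\subset\mathbb R^n$ be an $n$-dimensional simple polytope $\Delta=\{x:\langle x,\lambda_i\rangle+\eta_i\ge0,\ i=1,\dots,m\}$ whose facets $H_i=\Delta\cap\{\langle x,\lambda_i\rangle+\eta_i=0\}$ are all nonempty. A generic cut is a hyperplane $\mathcal H=\{\langle x,\lambda_0\rangle+\xi=0\}$ in general position with the hyperplanes $\{\langle x,\lambda_i\rangle+\eta_i=0\}$ and with $H_o:=\mathcal H\cap\Delta\neq\varnothing$. Set $\Delta_\pm=\Delta\cap\{\pm(\langle x,\lambda_0\rangle+\xi)\ge0\}$, $K_\Delta=\{\sigma\subset[m]:\bigcap_{i\in\sigma}H_i\ne\varnothing\}\cup\{\varnothing\}$, $K_\pm=\{\sigma\subset\widetilde{[m]}:\bigcap_{i\in\sigma}(H_i\cap\Delta_\pm)\ne\varnothing\}\cup\{\varnothing\}$, all regarded as simplicial complexes on $\widetilde{[m]}$ (so $o$ is a vertex not in any face of $K_\Delta$). The Stanley–Reisner ring of a complex $L$ on $\widetilde{[m]}$ is $\mathbb Z[L]=\mathbb Z[x_j:j\in\widetilde{[m]}]/\langle x_\sigma:\sigma\notin L\rangle$, $x_\sigma=\prod_{j\in\sigma}x_j$. *)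

theory Defs
  imports "HOL-Analysis.Analysis" "HOL-Library.Poly_Mapping"
begin

text \<open>Vertex set [m]~ = {0..m}; the extra vertex o is encoded as 0, [m] = {1..m}.\<close>

definition polyhedron_of :: "nat \<Rightarrow> (nat \<Rightarrow> real^'n) \<Rightarrow> (nat \<Rightarrow> real) \<Rightarrow> (real^'n) set" where
  "polyhedron_of m lam eta = {x. \<forall>i\<in>{1..m}. lam i \<bullet> x + eta i \<ge> 0}"

definition facet_H :: "nat \<Rightarrow> (nat \<Rightarrow> real^'n) \<Rightarrow> (nat \<Rightarrow> real) \<Rightarrow> nat \<Rightarrow> (real^'n) set" where
  "facet_H m lam eta i = polyhedron_of m lam eta \<inter> {x. lam i \<bullet> x + eta i = 0}"

definition simple_polytope_data :: "nat \<Rightarrow> (nat \<Rightarrow> real^'n) \<Rightarrow> (nat \<Rightarrow> real) \<Rightarrow> bool" where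
  "simple_polytope_data m lam eta \<longleftrightarrow>
     (let D = polyhedron_of m lam eta in
       polytope D \<and> aff_dim D = int CARD('n) \<and>
       (\<forall>i\<in>{1..m}. facet_H m lam eta i facet_of D) \<and>
       inj_on (facet_H m lam eta) {1..m} \<and>
       (\<forall>v. v extreme_point_of D \<longrightarrow>
              card {i\<in>{1..m}. v \<in> facet_H m lam eta i} = CARD('n)))"

definition hyp :: "(nat \<Rightarrow> real^'n) \<Rightarrow> (nat \<Rightarrow> real) \<Rightarrow> real^'n \<Rightarrow> real \<Rightarrow> nat \<Rightarrow> (real^'n) set" where
  "hyp lam eta lam0 xi j =
     (if j = 0 then {x. lam0 \<bullet> x + xi = 0} else {x. lam j \<bullet> x + eta j = 0})"

definition generic_cut :: "nat \<Rightarrow> (nat \<Rightarrow> real^'n) \<Rightarrow> (nat \<Rightarrow> real) \<Rightarrow> real^'n \<Rightarrow> real \<Rightarrow> bool" where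
  "generic_cut m lam eta lam0 xi \<longleftrightarrow>
     (\<forall>\<sigma>. \<sigma> \<subseteq> {0..m} \<and> 0 \<in> \<sigma> \<longrightarrow>
        (\<Inter>j\<in>\<sigma>. hyp lam eta lam0 xi j) = {} \<or>
        aff_dim (\<Inter>j\<in>\<sigma>. hyp lam eta lam0 xi j) = int CARD('n) - int (card \<sigma>)) \<and>
     {x. lam0 \<bullet> x + xi = 0} \<inter> polyhedron_of m lam eta \<noteq> {}"

definition half_poly :: "nat \<Rightarrow> (nat \<Rightarrow> real^'n) \<Rightarrow> (nat \<Rightarrow> real) \<Rightarrow> real^'n \<Rightarrow> real \<Rightarrow> bool \<Rightarrow> (real^'n) set" where
  "half_poly m lam eta lam0 xi s = polyhedron_of m lam eta \<inter>
     {x. (if s then 1 else -1) * (lam0 \<bullet> x + xi) \<ge> 0}"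

text \<open>K_Delta as a complex on {0..m} (0 = o is a ghost vertex).\<close>
definition K_Delta :: "nat \<Rightarrow> (nat \<Rightarrow> real^'n) \<Rightarrow> (nat \<Rightarrow> real) \<Rightarrow> nat set set" where
  "K_Delta m lam eta = {\<sigma>. \<sigma> \<subseteq> {1..m} \<and> (\<sigma> = {} \<or> (\<Inter>i\<in>\<sigma>. facet_H m lam eta i) \<noteq> {})}"

text \<open>K_+ / K_-: facets of Delta_pm are H_i cap Delta_pm (i in [m]) and H_o (index 0).\<close>
definition K_half :: "nat \<Rightarrow> (nat \<Rightarrow> real^'n) \<Rightarrow> (nat \<Rightarrow> real) \<Rightarrow> real^'n \<Rightarrow> real \<Rightarrow> bool \<Rightarrow> nat set set" where
  "K_half m lam eta lam0 xi s = {\<sigma>. \<sigma> \<subseteq> {0..m} \<and> (\<sigma> = {} \<or>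
      (\<Inter>j\<in>\<sigma>. (if j = 0 then {x. lam0 \<bullet> x + xi = 0} \<inter> polyhedron_of m lam eta
                  else facet_H m lam eta j) \<inter> half_poly m lam eta lam0 xi s) \<noteq> {})}"

text \<open>Integer polynomials in variables x_0, x_1, ...; monomials are exponent vectors.\<close>
type_synonym zpoly = "(nat \<Rightarrow>\<^sub>0 nat) \<Rightarrow>\<^sub>0 int"

definition monom_x :: "(nat \<Rightarrow>\<^sub>0 nat) \<Rightarrow> zpoly" where
  "monom_x a = Poly_Mapping.single a 1"

definition var_x :: "nat \<Rightarrow> zpoly" where
  "var_x j = monom_x (Poly_Mapping.single j 1)"

definition monos_m :: "nat \<Rightarrow> (nat \<Rightarrow>\<^sub>0 nat) set" where
  "monos_m m = {a. Poly_Mapping.keys a \<subseteq> {0..m}}"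

definition polyring :: "nat \<Rightarrow> zpoly set" where
  "polyring m = {p. Poly_Mapping.keys p \<subseteq> monos_m m}"

definition gen_ideal :: "zpoly set \<Rightarrow> zpoly set \<Rightarrow> zpoly set" where
  "gen_ideal R G = {p. \<exists>(n::nat) c g. (\<forall>k<n. c k \<in> R \<and> g k \<in> G) \<and> p = (\<Sum>k<n. c k * g k)}"

definition SR_ideal :: "nat \<Rightarrow> nat set set \<Rightarrow> zpoly set" where
  "SR_ideal m L = gen_ideal (polyring m) {(\<Prod>j\<in>\<sigma>. var_x j) | \<sigma>. \<sigma> \<subseteq> {0..m} \<and> \<sigma> \<notin> L}"

inductive_set subring_gen :: "zpoly set \<Rightarrow> zpoly set" for G where
  const: "of_int k \<in> subring_gen G"
| gen: "g \<in> G \<Longrightarrow> g \<in> subring_gen G"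
| add: "p \<in> subring_gen G \<Longrightarrow> q \<in> subring_gen G \<Longrightarrow> p + q \<in> subring_gen G"
| mult: "p \<in> subring_gen G \<Longrightarrow> q \<in> subring_gen G \<Longrightarrow> p * q \<in> subring_gen G"

definition lin_form :: "nat \<Rightarrow> (nat \<Rightarrow> nat \<Rightarrow> int) \<Rightarrow> nat \<Rightarrow> zpoly" where
  "lin_form m B i = (\<Sum>j\<in>{0..m}. of_int (B i j) * var_x j)"

text \<open>An r x (m+1) integer matrix has rank r iff its rows are linearly independent (over Q).\<close>
definition full_row_rank :: "nat \<Rightarrow> nat \<Rightarrow> (nat \<Rightarrow> nat \<Rightarrow> int) \<Rightarrow> bool" where
  "full_row_rank r m B \<longleftrightarrow>
     (\<forall>c::nat \<Rightarrow> rat. (\<forall>j\<in>{0..m}. (\<Sum>i<r. c i * of_int (B i j)) = 0) \<longrightarrow> (\<forall>i<r. c i = 0))"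

definition S_ring :: "nat \<Rightarrow> nat \<Rightarrow> (nat \<Rightarrow> nat \<Rightarrow> int) \<Rightarrow> zpoly set" where
  "S_ring r m B = subring_gen (lin_form m B ` {..<r})"

text \<open>Augmentation ideal I = (u_1,...,u_r) of S, so that Z = S/I as an S-module.\<close>
definition aug_ideal :: "nat \<Rightarrow> nat \<Rightarrow> (nat \<Rightarrow> nat \<Rightarrow> int) \<Rightarrow> zpoly set" where
  "aug_ideal r m B = gen_ideal (S_ring r m B) (lin_form m B ` {..<r})"

text \<open>Tor_1^S(Z[L], S/I), computed from a free presentation 0 -> K -> F -> Z[L] -> 0, where
  F is the free S-module on the monomials x^a (a in monos_m m), F -> Z[L] sends the basis
  element e_a to the class of x^a, and K is the kernel.  Then
  Tor_1^S(Z[L], S/I) = ker(K/IK -> F/IF) = (K cap IF)/IK.\<close>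

definition free_mod :: "nat \<Rightarrow> nat \<Rightarrow> (nat \<Rightarrow> nat \<Rightarrow> int) \<Rightarrow> ((nat \<Rightarrow>\<^sub>0 nat) \<Rightarrow> zpoly) set" where
  "free_mod r m B = {f. finite {a. f a \<noteq> 0} \<and> (\<forall>a. f a \<noteq> 0 \<longrightarrow> a \<in> monos_m m) \<and>
                        (\<forall>a. f a \<in> S_ring r m B)}"

definition present_map :: "((nat \<Rightarrow>\<^sub>0 nat) \<Rightarrow> zpoly) \<Rightarrow> zpoly" where
  "present_map f = (\<Sum>a\<in>{a. f a \<noteq> 0}. f a * monom_x a)"

definition syz_mod :: "nat \<Rightarrow> nat \<Rightarrow> (nat \<Rightarrow> nat \<Rightarrow> int) \<Rightarrow> nat set set \<Rightarrow> ((nat \<Rightarrow>\<^sub>0 nat) \<Rightarrow> zpoly) set" where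
  "syz_mod r m B L = {f \<in> free_mod r m B. present_map f \<in> SR_ideal m L}"

definition ideal_times_mod :: "zpoly set \<Rightarrow> ((nat \<Rightarrow>\<^sub>0 nat) \<Rightarrow> zpoly) set \<Rightarrow> ((nat \<Rightarrow>\<^sub>0 nat) \<Rightarrow> zpoly) set" where
  "ideal_times_mod I N = {f. \<exists>(n::nat) c g. (\<forall>k<n. c k \<in> I \<and> g k \<in> N) \<and> f = (\<lambda>a. \<Sum>k<n. c k * g k a)}"

definition ideal_times_free :: "zpoly set \<Rightarrow> ((nat \<Rightarrow>\<^sub>0 nat) \<Rightarrow> zpoly) set \<Rightarrow> ((nat \<Rightarrow>\<^sub>0 nat) \<Rightarrow> zpoly) set" where
  "ideal_times_free I F = {f \<in> F. \<forall>a. f a \<in> I}"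

definition Tor1_SR_vanishes :: "nat \<Rightarrow> nat \<Rightarrow> (nat \<Rightarrow> nat \<Rightarrow> int) \<Rightarrow> nat set set \<Rightarrow> bool" where
  "Tor1_SR_vanishes r m B L \<longleftrightarrow>
     syz_mod r m B L \<inter> ideal_times_free (aug_ideal r m B) (free_mod r m B)
       \<subseteq> ideal_times_mod (aug_ideal r m B) (syz_mod r m B L)"

end

theory Submission imports Defs begin

lemma keys_add_nat: "Poly_Mapping.keys (a + b) = Poly_Mapping.keys a \<union> Poly_Mapping.keys (b :: nat \<Rightarrow>\<^sub>0 nat)"
  by (auto simp: in_keys_iff lookup_add)

lemma sum_concat_nat: "(\<Sum>k<(n1::nat)+n2. h k) = (\<Sum>k<n1. h k) + (\<Sum>k<n2. h (n1+k))"
  by (induction n2) (simp_all add: add.assoc)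

lemma zero_monos: "0 \<in> monos_m m"
  by (simp add: monos_m_def)

lemma polyring_zero: "0 \<in> polyring m"
  by (simp add: polyring_def)

lemma polyring_add: "p \<in> polyring m \<Longrightarrow> q \<in> polyring m \<Longrightarrow> p + q \<in> polyring m"
  unfolding polyring_def using keys_add[of p q] by (auto dest: subsetD)

lemma polyring_uminus: "p \<in> polyring m \<Longrightarrow> - p \<in> polyring m"
  unfolding polyring_def by simp

lemma polyring_diff: "p \<in> polyring m \<Longrightarrow> q \<in> polyring m \<Longrightarrow> p - q \<in> polyring m"
  using polyring_add[of p m "-q"] polyring_uminus by simp

lemma polyring_mult: "p \<in> polyring m \<Longrightarrow> q \<in> polyring m \<Longrightarrow> p * q \<in> polyring m"
proof -
  assume p: "p \<in> polyring m" and q: "q \<in> polyring m"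
  have "Poly_Mapping.keys (p * q) \<subseteq> monos_m m"
  proof
    fix x assume "x \<in> Poly_Mapping.keys (p * q)"
    then obtain a b where "x = a + b" "a \<in> Poly_Mapping.keys p" "b \<in> Poly_Mapping.keys q"
      using keys_mult by blast
    then show "x \<in> monos_m m" using p q by (auto simp: polyring_def monos_m_def keys_add_nat)
  qed
  then show ?thesis by (simp add: polyring_def)
qed

lemma polyring_of_int: "(of_int k :: zpoly) \<in> polyring m"
proof -
  have "(of_int k :: zpoly) = Poly_Mapping.single 0 k" by (metis single_of_int of_int_eq_id id_apply)
  then show ?thesis by (simp add: polyring_def zero_monos)
qed

lemma polyring_sum: "(\<And>k. k \<in> A \<Longrightarrow> f k \<in> polyring m) \<Longrightarrow> sum f A \<in> polyring m"
  by (induction A rule: infinite_finite_induct) (auto simp: polyring_zero polyring_add)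

lemma monom_x_poly: "a \<in> monos_m m \<Longrightarrow> monom_x a \<in> polyring m"
  by (simp add: monom_x_def polyring_def)

lemma var_x_poly: "j \<le> m \<Longrightarrow> var_x j \<in> polyring m"
  unfolding var_x_def by (rule monom_x_poly) (simp add: monos_m_def)

lemma lin_form_poly: "lin_form m B i \<in> polyring m"
  unfolding lin_form_def
  by (rule polyring_sum) (simp add: polyring_mult polyring_of_int var_x_poly)

lemma S_sub: "p \<in> S_ring r m B \<Longrightarrow> p \<in> polyring m"
  unfolding S_ring_def
  by (induction rule: subring_gen.induct)
     (auto simp: polyring_of_int lin_form_poly polyring_add polyring_mult)

lemma S_add: "p \<in> S_ring r m B \<Longrightarrow> q \<in> S_ring r m B \<Longrightarrow> p + q \<in> S_ring r m B"
  unfolding S_ring_def by (rule subring_gen.add)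
lemma S_mult: "p \<in> S_ring r m B \<Longrightarrow> q \<in> S_ring r m B \<Longrightarrow> p * q \<in> S_ring r m B"
  unfolding S_ring_def by (rule subring_gen.mult)
lemma S_of_int: "of_int k \<in> S_ring r m B"
  unfolding S_ring_def by (rule subring_gen.const)
lemma S_zero: "0 \<in> S_ring r m B"
  using S_of_int[of 0] by simp
lemma S_uminus: "p \<in> S_ring r m B \<Longrightarrow> - p \<in> S_ring r m B"
  using S_mult[OF S_of_int[of "-1"], of p] by simp
lemma S_diff: "p \<in> S_ring r m B \<Longrightarrow> q \<in> S_ring r m B \<Longrightarrow> p - q \<in> S_ring r m B"
  using S_add[of p r m B "-q"] S_uminus by simp
lemma S_sum: "(\<And>k. k \<in> A \<Longrightarrow> f k \<in> S_ring r m B) \<Longrightarrow> sum f A \<in> S_ring r m B"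
  by (induction A rule: infinite_finite_induct) (auto simp: S_zero S_add)

lemma gen_idealI: "(\<forall>k<(n::nat). c k \<in> R \<and> g k \<in> G) \<Longrightarrow> p = (\<Sum>k<n. c k * g k) \<Longrightarrow> p \<in> gen_ideal R G"
  unfolding gen_ideal_def by blast

lemma gen_ideal_zero: "0 \<in> gen_ideal R G"
  unfolding gen_ideal_def by (rule CollectI, rule exI[of _ 0]) simp

lemma gen_ideal_single: "c \<in> R \<Longrightarrow> g \<in> G \<Longrightarrow> c * g \<in> gen_ideal R G"
  unfolding gen_ideal_def
  by (rule CollectI, rule exI[of _ 1], rule exI[of _ "\<lambda>_. c"], rule exI[of _ "\<lambda>_. g"]) simp

lemma gen_ideal_add:
  assumes "p \<in> gen_ideal R G" "q \<in> gen_ideal R G" shows "p + q \<in> gen_ideal R G"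
proof -
  obtain n1 :: nat and c1 g1 where 1: "\<forall>k<n1. c1 k \<in> R \<and> g1 k \<in> G" "p = (\<Sum>k<n1. c1 k * g1 k)"
    using assms(1) unfolding gen_ideal_def by blast
  obtain n2 :: nat and c2 g2 where 2: "\<forall>k<n2. c2 k \<in> R \<and> g2 k \<in> G" "q = (\<Sum>k<n2. c2 k * g2 k)"
    using assms(2) unfolding gen_ideal_def by blast
  define c where "c k = (if k < n1 then c1 k else c2 (k - n1))" for k
  define g where "g k = (if k < n1 then g1 k else g2 (k - n1))" for k
  have "(\<Sum>k<n1+n2. c k * g k) = p + q"
    unfolding sum_concat_nat 1 2 c_def g_def by simp
  moreover have "\<forall>k<n1+n2. c k \<in> R \<and> g k \<in> G"
    using 1 2 by (auto simp: c_def g_def)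
  ultimately show ?thesis by (intro gen_idealI[of "n1+n2" c R g G]) auto
qed

lemma gen_ideal_sum: "(\<And>k. k \<in> A \<Longrightarrow> f k \<in> gen_ideal R G) \<Longrightarrow> sum f A \<in> gen_ideal R G"
  by (induction A rule: infinite_finite_induct) (auto simp: gen_ideal_zero gen_ideal_add)

lemma gen_ideal_mult:
  assumes R: "\<And>a b. a \<in> R \<Longrightarrow> b \<in> R \<Longrightarrow> a * b \<in> R"
    and c: "c \<in> R" and p: "p \<in> gen_ideal R G"
  shows "c * p \<in> gen_ideal R G"
proof -
  obtain n :: nat and c1 g1 where 1: "\<forall>k<n. c1 k \<in> R \<and> g1 k \<in> G" "p = (\<Sum>k<n. c1 k * g1 k)"
    using p unfolding gen_ideal_def by blast
  have "c * p = (\<Sum>k<n. (c * c1 k) * g1 k)"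
    unfolding 1 by (simp add: sum_distrib_left mult.assoc)
  moreover have "\<forall>k<n. c * c1 k \<in> R \<and> g1 k \<in> G" using 1 R c by auto
  ultimately show ?thesis by (intro gen_idealI[of n "\<lambda>k. c * c1 k" R g1 G]) auto
qed

lemma gen_ideal_sub:
  assumes "G \<subseteq> R" "0 \<in> R" "\<And>a b. a \<in> R \<Longrightarrow> b \<in> R \<Longrightarrow> a + b \<in> R"
    "\<And>a b. a \<in> R \<Longrightarrow> b \<in> R \<Longrightarrow> a * b \<in> R" "p \<in> gen_ideal R G"
  shows "p \<in> R"
proof -
  obtain n :: nat and c1 g1 where 1: "\<forall>k<n. c1 k \<in> R \<and> g1 k \<in> G" "p = (\<Sum>k<n. c1 k * g1 k)"
    using assms(5) unfolding gen_ideal_def by blast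
  have "(\<Sum>k\<in>A. c1 k * g1 k) \<in> R" if "A \<subseteq> {..<n}" for A
    using that
  proof (induction A rule: infinite_finite_induct)
    case (infinite A) then show ?case using assms(2) by simp
  next
    case empty then show ?case using assms(2) by simp
  next
    case (insert x A)
    have x: "x < n" using insert(4) by auto
    have "c1 x \<in> R" "g1 x \<in> R" using x 1(1) assms(1) by auto
    then have "c1 x * g1 x \<in> R" by (rule assms(4))
    moreover have "(\<Sum>k\<in>A. c1 k * g1 k) \<in> R" using insert(3,4) by auto
    ultimately show ?case using insert(1,2) assms(3) by (simp add: sum.insert)
  qed
  from this[of "{..<n}"] 1(2) show ?thesis by simp
qed

lemma I_sub_S: "p \<in> aug_ideal r m B \<Longrightarrow> p \<in> S_ring r m B"
  unfolding aug_ideal_def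
  by (rule gen_ideal_sub) (auto simp: S_zero[unfolded S_ring_def] S_add[unfolded S_ring_def] S_mult[unfolded S_ring_def] S_ring_def intro: subring_gen.gen)

lemma I_zero: "0 \<in> aug_ideal r m B"
  unfolding aug_ideal_def by (rule gen_ideal_zero)
lemma I_add: "p \<in> aug_ideal r m B \<Longrightarrow> q \<in> aug_ideal r m B \<Longrightarrow> p + q \<in> aug_ideal r m B"
  unfolding aug_ideal_def by (rule gen_ideal_add)
lemma I_mult: "c \<in> S_ring r m B \<Longrightarrow> p \<in> aug_ideal r m B \<Longrightarrow> c * p \<in> aug_ideal r m B"
  unfolding aug_ideal_def by (rule gen_ideal_mult) (auto simp: S_mult)
lemma I_mult2: "c \<in> S_ring r m B \<Longrightarrow> p \<in> aug_ideal r m B \<Longrightarrow> p * c \<in> aug_ideal r m B"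
  using I_mult by (simp add: mult.commute)
lemma I_uminus: "p \<in> aug_ideal r m B \<Longrightarrow> - p \<in> aug_ideal r m B"
  using I_mult[OF S_of_int[of "-1"]] by simp
lemma I_diff: "p \<in> aug_ideal r m B \<Longrightarrow> q \<in> aug_ideal r m B \<Longrightarrow> p - q \<in> aug_ideal r m B"
  using I_add[of p r m B "-q"] I_uminus by simp
lemma I_sum: "(\<And>k. k \<in> A \<Longrightarrow> f k \<in> aug_ideal r m B) \<Longrightarrow> sum f A \<in> aug_ideal r m B"
  by (induction A rule: infinite_finite_induct) (auto simp: I_zero I_add)


section \<open>Monomial description of Stanley-Reisner ideals\<close>

definition downclosed :: "nat set set \<Rightarrow> bool" where
  "downclosed L \<longleftrightarrow> (\<forall>\<sigma> \<tau>. \<sigma> \<in> L \<longrightarrow> \<tau> \<subseteq> \<sigma> \<longrightarrow> \<tau> \<in> L)"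

definition Jm :: "nat \<Rightarrow> nat set set \<Rightarrow> zpoly set" where
  "Jm m L = {p \<in> polyring m. \<forall>a \<in> Poly_Mapping.keys p. Poly_Mapping.keys a \<notin> L}"

definition ind :: "nat set \<Rightarrow> (nat \<Rightarrow>\<^sub>0 nat)" where
  "ind \<sigma> = (\<Sum>j\<in>\<sigma>. Poly_Mapping.single j 1)"

lemma lookup_ind: "finite \<sigma> \<Longrightarrow> Poly_Mapping.lookup (ind \<sigma>) j = (if j \<in> \<sigma> then 1 else 0)"
  unfolding ind_def by (simp add: lookup_sum lookup_single when_def)

lemma keys_ind: "finite \<sigma> \<Longrightarrow> Poly_Mapping.keys (ind \<sigma>) = \<sigma>"
  by (auto simp: in_keys_iff lookup_ind split: if_splits)

lemma monom_mult: "monom_x a * monom_x b = monom_x (a + b)"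
  unfolding monom_x_def by (simp add: mult_single)

lemma prod_var: "finite \<sigma> \<Longrightarrow> (\<Prod>j\<in>\<sigma>. var_x j) = monom_x (ind \<sigma>)"
proof (induction \<sigma> rule: finite_induct)
  case empty then show ?case by (simp add: ind_def monom_x_def)
next
  case (insert x F)
  then show ?case by (simp add: ind_def var_x_def monom_mult)
qed

lemma keys_monom: "Poly_Mapping.keys (monom_x a) = {a}"
  by (simp add: monom_x_def)

lemma Jm_poly: "p \<in> Jm m L \<Longrightarrow> p \<in> polyring m"
  by (simp add: Jm_def)

lemma Jm_zero: "0 \<in> Jm m L"
  by (simp add: Jm_def polyring_zero)

lemma Jm_add: "p \<in> Jm m L \<Longrightarrow> q \<in> Jm m L \<Longrightarrow> p + q \<in> Jm m L"
  unfolding Jm_def using keys_add[of p q] by (auto simp: polyring_add dest: subsetD)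

lemma Jm_uminus: "p \<in> Jm m L \<Longrightarrow> - p \<in> Jm m L"
  unfolding Jm_def by (auto simp: polyring_uminus)

lemma Jm_diff: "p \<in> Jm m L \<Longrightarrow> q \<in> Jm m L \<Longrightarrow> p - q \<in> Jm m L"
  using Jm_add[of p m L "-q"] Jm_uminus by simp

lemma Jm_sum: "(\<And>k. k \<in> A \<Longrightarrow> f k \<in> Jm m L) \<Longrightarrow> sum f A \<in> Jm m L"
  by (induction A rule: infinite_finite_induct) (auto simp: Jm_zero Jm_add)

lemma Jm_mult:
  assumes L: "downclosed L" and c: "c \<in> polyring m" and p: "p \<in> Jm m L"
  shows "c * p \<in> Jm m L"
proof -
  have "Poly_Mapping.keys x \<notin> L" if x: "x \<in> Poly_Mapping.keys (c * p)" for x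
  proof
    assume xL: "Poly_Mapping.keys x \<in> L"
    obtain a b where ab: "x = a + b" "a \<in> Poly_Mapping.keys c" "b \<in> Poly_Mapping.keys p"
      using keys_mult[of c p] x by blast
    have "Poly_Mapping.keys b \<subseteq> Poly_Mapping.keys x" using ab(1) keys_add_nat by auto
    then have "Poly_Mapping.keys b \<in> L" using xL L unfolding downclosed_def by blast
    then show False using p ab(3) unfolding Jm_def by blast
  qed
  then show ?thesis using c p polyring_mult[OF c Jm_poly[OF p]] unfolding Jm_def by blast
qed

lemma SR_ideal_sub_Jm:
  assumes L: "downclosed L"
  shows "SR_ideal m L \<subseteq> Jm m L"
proof
  fix p assume "p \<in> SR_ideal m L"
  then obtain n :: nat and c g where 1: "\<forall>k<n. c k \<in> polyring m \<and>
      g k \<in> {(\<Prod>j\<in>\<sigma>. var_x j) | \<sigma>. \<sigma> \<subseteq> {0..m} \<and> \<sigma> \<notin> L}" "p = (\<Sum>k<n. c k * g k)"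
    unfolding SR_ideal_def gen_ideal_def by blast
  have "g k \<in> Jm m L" if kn: "k < n" for k
  proof -
    obtain \<sigma> where s: "g k = (\<Prod>j\<in>\<sigma>. var_x j)" "\<sigma> \<subseteq> {0..m}" "\<sigma> \<notin> L"
      using 1(1) kn by blast
    have fin: "finite \<sigma>" using s(2) finite_subset by blast
    have gk: "g k = monom_x (ind \<sigma>)" using s(1) prod_var[OF fin] by simp
    have "ind \<sigma> \<in> monos_m m" using keys_ind[OF fin] s(2) by (simp add: monos_m_def)
    then show ?thesis using gk keys_ind[OF fin] s(3)
      by (simp add: Jm_def keys_monom monom_x_poly)
  qed
  then show "p \<in> Jm m L" unfolding 1(2)
    by (intro Jm_sum) (simp add: Jm_mult[OF L] 1(1))
qed

lemma SR_ideal_diff: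
  "p \<in> SR_ideal m L \<Longrightarrow> q \<in> SR_ideal m L \<Longrightarrow> p - q \<in> SR_ideal m L"
proof -
  assume p: "p \<in> SR_ideal m L" and q: "q \<in> SR_ideal m L"
  have m1: "(of_int (-1)::zpoly) \<in> polyring m" by (rule polyring_of_int)
  have "of_int (-1) * q \<in> SR_ideal m L"
    unfolding SR_ideal_def
    by (rule gen_ideal_mult[OF _ m1]) (use q polyring_mult in \<open>auto simp: SR_ideal_def\<close>)
  then show ?thesis using gen_ideal_add[of p "polyring m" _ "of_int (-1) * q"] p
    by (simp add: SR_ideal_def)
qed

lemma Jm_sub_SR_ideal:
  assumes L: "downclosed L"
  shows "Jm m L \<subseteq> SR_ideal m L"
proof
  fix p assume p: "p \<in> Jm m L"
  have ks: "Poly_Mapping.keys p \<subseteq> {a \<in> monos_m m. Poly_Mapping.keys a \<notin> L}"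
    using p unfolding Jm_def polyring_def by blast
  show "p \<in> SR_ideal m L"
    using ks
  proof (induction rule: frag_induction)
    case zero then show ?case unfolding SR_ideal_def by (rule gen_ideal_zero)
  next
    case (one a)
    define \<sigma> where "\<sigma> = Poly_Mapping.keys a"
    have fin: "finite \<sigma>" by (simp add: \<sigma>_def)
    have sm: "\<sigma> \<subseteq> {0..m}" "\<sigma> \<notin> L" using one by (auto simp: \<sigma>_def monos_m_def)
    have eq: "(a - ind \<sigma>) + ind \<sigma> = a"
    proof (rule poly_mapping_eqI)
      fix j
      show "Poly_Mapping.lookup (a - ind \<sigma> + ind \<sigma>) j = Poly_Mapping.lookup a j"
        using lookup_ind[OF fin, of j]
        by (auto simp: lookup_add lookup_minus \<sigma>_def in_keys_iff)
    qed
    have "Poly_Mapping.keys (a - ind \<sigma>) \<subseteq> Poly_Mapping.keys a"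
      by (auto simp: in_keys_iff lookup_minus)
    then have c: "monom_x (a - ind \<sigma>) \<in> polyring m"
      using one by (intro monom_x_poly) (auto simp: monos_m_def)
    have g: "(\<Prod>j\<in>\<sigma>. var_x j) \<in> {(\<Prod>j\<in>\<sigma>. var_x j) | \<sigma>. \<sigma> \<subseteq> {0..m} \<and> \<sigma> \<notin> L}"
      using sm by blast
    have "monom_x (a - ind \<sigma>) * (\<Prod>j\<in>\<sigma>. var_x j) = monom_x a"
      using eq by (simp add: prod_var[OF fin] monom_mult)
    then show ?case using gen_ideal_single[OF c g]
      by (simp add: SR_ideal_def monom_x_def)
  next
    case (diff a b) then show ?case by (rule SR_ideal_diff)
  qed
qed

lemma SR_eq_Jm: "downclosed L \<Longrightarrow> SR_ideal m L = Jm m L"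
  using SR_ideal_sub_Jm Jm_sub_SR_ideal by blast


section \<open>The free module\<close>

definition lc :: "nat \<Rightarrow> (nat \<Rightarrow> zpoly) \<Rightarrow> (nat \<Rightarrow> (nat \<Rightarrow>\<^sub>0 nat) \<Rightarrow> zpoly) \<Rightarrow> (nat \<Rightarrow>\<^sub>0 nat) \<Rightarrow> zpoly" where
  "lc n c g = (\<lambda>a. \<Sum>k<n. c k * g k a)"

lemma F_fin: "f \<in> free_mod r m B \<Longrightarrow> finite {a. f a \<noteq> 0}"
  by (simp add: free_mod_def)

lemma F_S: "f \<in> free_mod r m B \<Longrightarrow> f a \<in> S_ring r m B"
  by (simp add: free_mod_def)

lemma F_monos: "f \<in> free_mod r m B \<Longrightarrow> f a \<noteq> 0 \<Longrightarrow> a \<in> monos_m m"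
  by (simp add: free_mod_def)

lemma pm_superset:
  assumes "finite A" "{a. f a \<noteq> 0} \<subseteq> A"
  shows "present_map f = (\<Sum>a\<in>A. f a * monom_x a)"
  unfolding present_map_def
  by (rule sum.mono_neutral_left) (use assms in auto)

lemma pm_poly: "f \<in> free_mod r m B \<Longrightarrow> present_map f \<in> polyring m"
  unfolding present_map_def
proof (rule polyring_sum)
  fix a assume f: "f \<in> free_mod r m B" and a: "a \<in> {a. f a \<noteq> 0}"
  have "f a \<in> polyring m" by (rule S_sub[OF F_S[OF f]])
  moreover have "monom_x a \<in> polyring m" using F_monos[OF f] a by (simp add: monom_x_poly)
  ultimately show "f a * monom_x a \<in> polyring m" by (rule polyring_mult)
qed

lemma lc_F:
  assumes "\<forall>k<n. c k \<in> S_ring r m B \<and> g k \<in> free_mod r m B"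
  shows "lc n c g \<in> free_mod r m B"
proof -
  have sub: "{a. lc n c g a \<noteq> 0} \<subseteq> (\<Union>k<n. {a. g k a \<noteq> 0})"
  proof
    fix a assume "a \<in> {a. lc n c g a \<noteq> 0}"
    then have "(\<Sum>k<n. c k * g k a) \<noteq> 0" by (simp add: lc_def)
    then obtain k where "k < n" "c k * g k a \<noteq> 0" using sum.not_neutral_contains_not_neutral by blast
    then show "a \<in> (\<Union>k<n. {a. g k a \<noteq> 0})" by auto
  qed
  have fin: "finite (\<Union>k<n. {a. g k a \<noteq> 0})" using assms F_fin by auto
  have mon: "a \<in> monos_m m" if la: "lc n c g a \<noteq> 0" for a
  proof -
    obtain k where "k < n" "g k a \<noteq> 0" using sub la by blast
    then show ?thesis using assms F_monos by blast
  qed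
  have "lc n c g a \<in> S_ring r m B" for a
    unfolding lc_def by (rule S_sum) (use assms F_S S_mult in auto)
  then show ?thesis using finite_subset[OF sub fin] mon by (simp add: free_mod_def)
qed

lemma pm_lc:
  assumes "\<forall>k<n. g k \<in> free_mod r m B"
  shows "present_map (lc n c g) = (\<Sum>k<n. c k * present_map (g k))"
proof -
  define A where "A = (\<Union>k<n. {a. g k a \<noteq> 0})"
  have fin: "finite A" using assms F_fin by (auto simp: A_def)
  have sub: "{a. lc n c g a \<noteq> 0} \<subseteq> A"
  proof
    fix a assume "a \<in> {a. lc n c g a \<noteq> 0}"
    then have "(\<Sum>k<n. c k * g k a) \<noteq> 0" by (simp add: lc_def)
    then obtain k where "k < n" "c k * g k a \<noteq> 0" using sum.not_neutral_contains_not_neutral by blast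
    then show "a \<in> A" by (auto simp: A_def)
  qed
  have pk: "present_map (g k) = (\<Sum>a\<in>A. g k a * monom_x a)" if "k < n" for k
    by (rule pm_superset[OF fin]) (use that in \<open>auto simp: A_def\<close>)
  have "present_map (lc n c g) = (\<Sum>a\<in>A. (\<Sum>k<n. c k * g k a) * monom_x a)"
    using pm_superset[OF fin sub] by (simp add: lc_def)
  also have "\<dots> = (\<Sum>k<n. c k * (\<Sum>a\<in>A. g k a * monom_x a))"
    by (simp add: sum_distrib_right sum_distrib_left mult.assoc sum.swap[of _ A])
  also have "\<dots> = (\<Sum>k<n. c k * present_map (g k))"
    using pk by simp
  finally show ?thesis .
qed

lemma F_diff:
  assumes "f \<in> free_mod r m B" "g \<in> free_mod r m B"
  shows "(\<lambda>a. f a - g a) \<in> free_mod r m B \<and>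
         present_map (\<lambda>a. f a - g a) = present_map f - present_map g"
proof -
  define c :: "nat \<Rightarrow> zpoly" where "c k = (if k = 0 then 1 else -1)" for k
  define h where "h k = (if k = 0 then f else g)" for k :: nat
  have e: "(\<lambda>a. f a - g a) = lc 2 c h"
    by (rule ext) (simp add: lc_def c_def h_def numeral_2_eq_2)
  have hyp: "\<forall>k<2. c k \<in> S_ring r m B \<and> h k \<in> free_mod r m B"
    using assms S_of_int[of 1] S_of_int[of "-1"] by (auto simp: c_def h_def)
  have F: "lc 2 c h \<in> free_mod r m B" by (rule lc_F[OF hyp])
  have P: "present_map (lc 2 c h) = (\<Sum>k<2. c k * present_map (h k))"
    by (rule pm_lc) (use hyp in auto)
  have "(\<Sum>k<2. c k * present_map (h k)) = present_map f - present_map g"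
    by (simp add: c_def h_def numeral_2_eq_2)
  then show ?thesis unfolding e using F P by simp
qed

lemma lift_poly:
  assumes q: "q \<in> polyring m"
  shows "\<exists>h. h \<in> free_mod r m B \<and> present_map h = q"
proof -
  define h where "h a = (of_int (Poly_Mapping.lookup q a) :: zpoly)" for a
  have supp: "{a. h a \<noteq> 0} = Poly_Mapping.keys q"
    by (auto simp: h_def in_keys_iff)
  have "h \<in> free_mod r m B"
    using q supp by (auto simp: free_mod_def h_def S_of_int polyring_def)
  moreover have "present_map h = q"
  proof -
    have "present_map h = (\<Sum>a\<in>Poly_Mapping.keys q. Poly_Mapping.single a (Poly_Mapping.lookup q a))"
      unfolding present_map_def supp
    proof (rule sum.cong[OF refl])
      fix a
      have "h a = Poly_Mapping.single 0 (Poly_Mapping.lookup q a)"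
        by (metis h_def single_of_int of_int_eq_id id_apply)
      then show "h a * monom_x a = Poly_Mapping.single a (Poly_Mapping.lookup q a)"
        by (simp add: monom_x_def mult_single)
    qed
    also have "\<dots> = q"
    proof (rule poly_mapping_eqI)
      fix j
      show "Poly_Mapping.lookup (\<Sum>a\<in>Poly_Mapping.keys q. Poly_Mapping.single a (Poly_Mapping.lookup q a)) j
            = Poly_Mapping.lookup q j"
        by (simp add: lookup_sum lookup_single when_def in_keys_iff)
    qed
    finally show ?thesis .
  qed
  ultimately show ?thesis by blast
qed

definition e0 :: "nat \<Rightarrow>\<^sub>0 nat" where "e0 = Poly_Mapping.single 0 1"

definition sh :: "((nat \<Rightarrow>\<^sub>0 nat) \<Rightarrow> zpoly) \<Rightarrow> (nat \<Rightarrow>\<^sub>0 nat) \<Rightarrow> zpoly" where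
  "sh f a = (if 0 < Poly_Mapping.lookup a 0 then f (a - e0) else 0)"

lemma e0_split: "0 < Poly_Mapping.lookup a 0 \<Longrightarrow> (a - e0) + e0 = a"
  by (rule poly_mapping_eqI) (auto simp: lookup_add lookup_minus e0_def lookup_single when_def)

lemma sh_at: "sh f (b + e0) = f b"
  by (simp add: sh_def lookup_add e0_def)

lemma sh_F:
  assumes f: "f \<in> free_mod r m B"
  shows "sh f \<in> free_mod r m B \<and> present_map (sh f) = var_x 0 * present_map f"
proof -
  define A where "A = {a. f a \<noteq> 0}"
  have fin: "finite A" using F_fin[OF f] by (simp add: A_def)
  have sub: "{a. sh f a \<noteq> 0} \<subseteq> (\<lambda>b. b + e0) ` A"
  proof
    fix a assume "a \<in> {a. sh f a \<noteq> 0}"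
    then have a: "0 < Poly_Mapping.lookup a 0" "f (a - e0) \<noteq> 0" by (auto simp: sh_def split: if_splits)
    then show "a \<in> (\<lambda>b. b + e0) ` A" using e0_split[OF a(1)] unfolding A_def by (metis (mono_tags, lifting) image_eqI mem_Collect_eq)
  qed
  have mon: "a \<in> monos_m m" if sa: "sh f a \<noteq> 0" for a
  proof -
    obtain b where b: "a = b + e0" "f b \<noteq> 0" using sub sa by (auto simp: A_def)
    have "b \<in> monos_m m" using F_monos[OF f b(2)] .
    then show ?thesis using b(1) by (auto simp: monos_m_def keys_add_nat e0_def)
  qed
  have "sh f a \<in> S_ring r m B" for a
    by (simp add: sh_def F_S[OF f] S_zero)
  then have F: "sh f \<in> free_mod r m B"
    using finite_subset[OF sub finite_imageI[OF fin]] mon by (simp add: free_mod_def)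
  have inj: "inj_on (\<lambda>b. b + e0) A" by (rule inj_onI) simp
  have "present_map (sh f) = (\<Sum>a\<in>(\<lambda>b. b + e0) ` A. sh f a * monom_x a)"
    by (rule pm_superset[OF finite_imageI[OF fin] sub])
  also have "\<dots> = (\<Sum>b\<in>A. f b * monom_x (b + e0))"
    by (simp add: sum.reindex[OF inj] sh_at)
  also have "\<dots> = (\<Sum>b\<in>A. var_x 0 * (f b * monom_x b))"
  proof (rule sum.cong[OF refl])
    fix b
    have v: "var_x 0 = monom_x e0" by (simp add: var_x_def e0_def)
    show "f b * monom_x (b + e0) = var_x 0 * (f b * monom_x b)"
      unfolding v monom_mult[symmetric] by (simp add: algebra_simps)
  qed
  also have "\<dots> = var_x 0 * (\<Sum>b\<in>A. f b * monom_x b)"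
    by (simp add: sum_distrib_left)
  also have "\<dots> = var_x 0 * present_map f"
    by (simp add: present_map_def A_def)
  finally show ?thesis using F by simp
qed

lemma sh_lc: "sh (lc n c g) = lc n c (\<lambda>k. sh (g k))"
  by (rule ext) (simp add: sh_def lc_def)

section \<open>Tor_1 vanishing, abstractly\<close>

definition KS :: "nat \<Rightarrow> nat \<Rightarrow> (nat \<Rightarrow> nat \<Rightarrow> int) \<Rightarrow> zpoly set \<Rightarrow> ((nat \<Rightarrow>\<^sub>0 nat) \<Rightarrow> zpoly) set" where
  "KS r m B J = {f \<in> free_mod r m B. present_map f \<in> J}"

definition TorV :: "nat \<Rightarrow> nat \<Rightarrow> (nat \<Rightarrow> nat \<Rightarrow> int) \<Rightarrow> zpoly set \<Rightarrow> bool" where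
  "TorV r m B J \<longleftrightarrow> KS r m B J \<inter> ideal_times_free (aug_ideal r m B) (free_mod r m B)
      \<subseteq> ideal_times_mod (aug_ideal r m B) (KS r m B J)"

lemma Tor1_TorV: "Tor1_SR_vanishes r m B L \<longleftrightarrow> TorV r m B (SR_ideal m L)"
  by (simp add: Tor1_SR_vanishes_def TorV_def KS_def syz_mod_def)

lemma IM_I: "(\<forall>k<n. c k \<in> I \<and> g k \<in> N) \<Longrightarrow> lc n c g \<in> ideal_times_mod I N"
  unfolding ideal_times_mod_def lc_def by blast

lemma IM_E: "f \<in> ideal_times_mod I N \<Longrightarrow> \<exists>n c g. (\<forall>k<n. c k \<in> I \<and> g k \<in> N) \<and> f = lc n c g"
  unfolding ideal_times_mod_def lc_def by blast

lemma IM_mono: "N \<subseteq> N' \<Longrightarrow> f \<in> ideal_times_mod I N \<Longrightarrow> f \<in> ideal_times_mod I N'"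
  unfolding ideal_times_mod_def by blast

lemma IM_add:
  assumes "f \<in> ideal_times_mod I N" "g \<in> ideal_times_mod I N"
  shows "(\<lambda>a. f a + g a) \<in> ideal_times_mod I N"
proof -
  obtain n1 c1 g1 where 1: "\<forall>k<n1. c1 k \<in> I \<and> g1 k \<in> N" "f = lc n1 c1 g1" using IM_E[OF assms(1)] by blast
  obtain n2 c2 g2 where 2: "\<forall>k<n2. c2 k \<in> I \<and> g2 k \<in> N" "g = lc n2 c2 g2" using IM_E[OF assms(2)] by blast
  define c where "c k = (if k < n1 then c1 k else c2 (k - n1))" for k
  define h where "h k = (if k < n1 then g1 k else g2 (k - n1))" for k
  have "(\<lambda>a. f a + g a) = lc (n1+n2) c h"
    unfolding 1 2 lc_def c_def h_def by (rule ext) (simp add: sum_concat_nat)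
  moreover have "\<forall>k<n1+n2. c k \<in> I \<and> h k \<in> N"
    using 1 2 by (auto simp: c_def h_def)
  ultimately show ?thesis using IM_I by metis
qed


definition idl :: "nat \<Rightarrow> zpoly set \<Rightarrow> bool" where
  "idl m J \<longleftrightarrow> J \<subseteq> polyring m \<and> 0 \<in> J \<and> (\<forall>p q. p \<in> J \<longrightarrow> q \<in> J \<longrightarrow> p + q \<in> J) \<and>
     (\<forall>p. p \<in> J \<longrightarrow> - p \<in> J) \<and> (\<forall>c p. c \<in> polyring m \<longrightarrow> p \<in> J \<longrightarrow> c * p \<in> J)"

lemma idl_poly: "idl m J \<Longrightarrow> p \<in> J \<Longrightarrow> p \<in> polyring m"
  unfolding idl_def by blast
lemma idl_zero: "idl m J \<Longrightarrow> 0 \<in> J"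
  unfolding idl_def by blast
lemma idl_add: "idl m J \<Longrightarrow> p \<in> J \<Longrightarrow> q \<in> J \<Longrightarrow> p + q \<in> J"
  unfolding idl_def by blast
lemma idl_neg: "idl m J \<Longrightarrow> p \<in> J \<Longrightarrow> - p \<in> J"
  unfolding idl_def by blast
lemma idl_mult: "idl m J \<Longrightarrow> c \<in> polyring m \<Longrightarrow> p \<in> J \<Longrightarrow> c * p \<in> J"
  unfolding idl_def by blast

lemma idl_diff: "idl m J \<Longrightarrow> p \<in> J \<Longrightarrow> q \<in> J \<Longrightarrow> p - q \<in> J"
  using idl_add[of m J p "- q"] idl_neg[of m J q] by simp

lemma idl_sum:
  assumes J: "idl m J" and h: "\<And>k. k \<in> A \<Longrightarrow> c k \<in> polyring m \<and> p k \<in> J"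
  shows "(\<Sum>k\<in>A. c k * p k) \<in> J"
proof (cases "finite A")
  case False then show ?thesis using idl_zero[OF J] by simp
next
  case True
  then show ?thesis using h
  proof (induction A rule: finite_induct)
    case empty then show ?case using idl_zero[OF J] by simp
  next
    case (insert x F)
    have hx: "c x \<in> polyring m \<and> p x \<in> J" by (rule insert.prems) simp
    have "c x * p x \<in> J" using hx idl_mult[OF J] by blast
    moreover have "(\<Sum>k\<in>F. c k * p k) \<in> J" by (rule insert.IH) (simp add: insert.prems)
    ultimately show ?case using insert(1,2) idl_add[OF J] by simp
  qed
qed

lemma idl_I:
  "J \<subseteq> polyring m \<Longrightarrow> 0 \<in> J \<Longrightarrow> (\<And>p q. p \<in> J \<Longrightarrow> q \<in> J \<Longrightarrow> p + q \<in> J) \<Longrightarrow>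
   (\<And>p. p \<in> J \<Longrightarrow> - p \<in> J) \<Longrightarrow> (\<And>c p. c \<in> polyring m \<Longrightarrow> p \<in> J \<Longrightarrow> c * p \<in> J) \<Longrightarrow> idl m J"
  by (simp add: idl_def)

lemma idl_int:
  assumes a1: "idl m J1" and a2: "idl m J2"
  shows "idl m (J1 \<inter> J2)"
proof (rule idl_I)
  show "J1 \<inter> J2 \<subseteq> polyring m" using idl_poly[OF a1] by blast
next
  show "0 \<in> J1 \<inter> J2" using idl_zero[OF a1] idl_zero[OF a2] by blast
next
  fix p q assume "p \<in> J1 \<inter> J2" "q \<in> J1 \<inter> J2"
  then show "p + q \<in> J1 \<inter> J2" using idl_add[OF a1, of p q] idl_add[OF a2, of p q] by blast
next
  fix p assume "p \<in> J1 \<inter> J2"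
  then show "- p \<in> J1 \<inter> J2" using idl_neg[OF a1, of p] idl_neg[OF a2, of p] by blast
next
  fix c p assume "c \<in> polyring m" "p \<in> J1 \<inter> J2"
  then show "c * p \<in> J1 \<inter> J2" using idl_mult[OF a1, of c p] idl_mult[OF a2, of c p] by blast
qed

lemma idl_Jm:
  assumes L: "downclosed L"
  shows "idl m (Jm m L)"
proof (rule idl_I)
  show "Jm m L \<subseteq> polyring m" using Jm_poly by blast
next
  show "0 \<in> Jm m L" by (rule Jm_zero)
next
  fix p q assume "p \<in> Jm m L" "q \<in> Jm m L"
  then show "p + q \<in> Jm m L" by (rule Jm_add)
next
  fix p assume "p \<in> Jm m L"
  then show "- p \<in> Jm m L" by (rule Jm_uminus)
next
  fix c p assume "c \<in> polyring m" "p \<in> Jm m L"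
  then show "c * p \<in> Jm m L" by (rule Jm_mult[OF L])
qed

lemma KS_mono: "J \<subseteq> J' \<Longrightarrow> KS r m B J \<subseteq> KS r m B J'"
  unfolding KS_def by blast

definition Gf :: "nat \<Rightarrow> (nat \<Rightarrow> real^'n) \<Rightarrow> (nat \<Rightarrow> real) \<Rightarrow> real^'n \<Rightarrow> real \<Rightarrow> nat \<Rightarrow> (real^'n) set" where
  "Gf m lam eta lam0 xi j = (if j = 0 then {x. lam0 \<bullet> x + xi = 0} \<inter> polyhedron_of m lam eta
                  else facet_H m lam eta j)"

lemma K_half_alt: "K_half m lam eta lam0 xi s = {\<sigma>. \<sigma> \<subseteq> {0..m} \<and> (\<sigma> = {} \<or>
      (\<Inter>j\<in>\<sigma>. Gf m lam eta lam0 xi j \<inter> half_poly m lam eta lam0 xi s) \<noteq> {})}"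
  unfolding K_half_def Gf_def by simp

lemma K_half_I:
  assumes "\<sigma> \<subseteq> {0..m}" "\<forall>j\<in>\<sigma>. x \<in> Gf m lam eta lam0 xi j \<inter> half_poly m lam eta lam0 xi s"
  shows "\<sigma> \<in> K_half m lam eta lam0 xi s"
proof -
  have "x \<in> (\<Inter>j\<in>\<sigma>. Gf m lam eta lam0 xi j \<inter> half_poly m lam eta lam0 xi s)"
    using assms(2) by blast
  then have "(\<Inter>j\<in>\<sigma>. Gf m lam eta lam0 xi j \<inter> half_poly m lam eta lam0 xi s) \<noteq> {}" by blast
  then show ?thesis using assms(1) unfolding K_half_alt by blast
qed

lemma K_half_sub: "\<sigma> \<in> K_half m lam eta lam0 xi s \<Longrightarrow> \<sigma> \<subseteq> {0..m}"
  unfolding K_half_alt by blast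

lemma K_half_E:
  assumes "\<sigma> \<in> K_half m lam eta lam0 xi s" "\<sigma> \<noteq> {}"
  shows "\<exists>x. \<forall>j\<in>\<sigma>. x \<in> Gf m lam eta lam0 xi j \<inter> half_poly m lam eta lam0 xi s"
proof -
  have "(\<Inter>j\<in>\<sigma>. Gf m lam eta lam0 xi j \<inter> half_poly m lam eta lam0 xi s) \<noteq> {}"
    using assms unfolding K_half_alt by blast
  then obtain x where "x \<in> (\<Inter>j\<in>\<sigma>. Gf m lam eta lam0 xi j \<inter> half_poly m lam eta lam0 xi s)"
    by blast
  then show ?thesis by blast
qed

lemma aff_comb:
  fixes l x y :: "real^'n"
  shows "l \<bullet> ((1 - t) *\<^sub>R x + t *\<^sub>R y) + e = (1 - t) * (l \<bullet> x + e) + t * (l \<bullet> y + e)"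
  by (simp add: inner_add_right inner_scaleR_right algebra_simps)

lemma poly_conv:
  assumes "x \<in> polyhedron_of m lam eta" "y \<in> polyhedron_of m lam eta" "0 \<le> t" "t \<le> 1"
  shows "(1 - t) *\<^sub>R x + t *\<^sub>R y \<in> polyhedron_of m lam eta"
  using assms unfolding polyhedron_of_def
  by (auto simp: aff_comb intro!: add_nonneg_nonneg mult_nonneg_nonneg)

lemma hyp_conv:
  fixes l x y :: "real^'n"
  assumes "l \<bullet> x + e = 0" "l \<bullet> y + e = 0"
  shows "l \<bullet> ((1 - t) *\<^sub>R x + t *\<^sub>R y) + e = 0"
  using assms by (simp add: aff_comb)

lemma Gf_conv:
  assumes "x \<in> Gf m lam eta lam0 xi j" "y \<in> Gf m lam eta lam0 xi j" "0 \<le> t" "t \<le> 1"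
  shows "(1 - t) *\<^sub>R x + t *\<^sub>R y \<in> Gf m lam eta lam0 xi j"
  using assms poly_conv[OF _ _ assms(3,4)] hyp_conv
  by (auto simp: Gf_def facet_H_def)

lemma Gf_D: "x \<in> Gf m lam eta lam0 xi j \<Longrightarrow> x \<in> polyhedron_of m lam eta"
  by (auto simp: Gf_def facet_H_def split: if_splits)

lemma half_iff: "x \<in> half_poly m lam eta lam0 xi s \<longleftrightarrow>
   x \<in> polyhedron_of m lam eta \<and> (if s then lam0 \<bullet> x + xi \<ge> 0 else lam0 \<bullet> x + xi \<le> 0)"
  by (auto simp: half_poly_def)

lemma downclosed_half: "downclosed (K_half m lam eta lam0 xi s)"
  unfolding downclosed_def K_half_alt by blast

lemma downclosed_Delta: "downclosed (K_Delta m lam eta)"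
  unfolding downclosed_def K_Delta_def by blast

lemma downclosed_Int: "downclosed L1 \<Longrightarrow> downclosed L2 \<Longrightarrow> downclosed (L1 \<inter> L2)"
  unfolding downclosed_def by blast

lemma g1:
  assumes "\<sigma> \<in> K_Delta m lam eta"
  shows "\<sigma> \<in> K_half m lam eta lam0 xi True \<or> \<sigma> \<in> K_half m lam eta lam0 xi False"
proof (cases "\<sigma> = {}")
  case True then show ?thesis by (intro disjI1 K_half_I[where x=undefined]) simp_all
next
  case False
  have s: "\<sigma> \<subseteq> {1..m}" and ne: "(\<Inter>i\<in>\<sigma>. facet_H m lam eta i) \<noteq> {}"
    using assms False by (auto simp: K_Delta_def)
  then obtain x where x: "\<forall>i\<in>\<sigma>. x \<in> facet_H m lam eta i" by blast
  obtain i0 where i0: "i0 \<in> \<sigma>" using False by blast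
  have xD: "x \<in> polyhedron_of m lam eta" using x i0 by (auto simp: facet_H_def)
  have G: "\<forall>j\<in>\<sigma>. x \<in> Gf m lam eta lam0 xi j" using x s by (auto simp: Gf_def)
  have s0: "\<sigma> \<subseteq> {0..m}" using s by auto
  show ?thesis
  proof (cases "lam0 \<bullet> x + xi \<ge> 0")
    case True
    then have "\<forall>j\<in>\<sigma>. x \<in> Gf m lam eta lam0 xi j \<inter> half_poly m lam eta lam0 xi True"
      using G xD by (auto simp: half_iff)
    then show ?thesis by (intro disjI1 K_half_I[OF s0])
  next
    case False
    then have "\<forall>j\<in>\<sigma>. x \<in> Gf m lam eta lam0 xi j \<inter> half_poly m lam eta lam0 xi False"
      using G xD by (auto simp: half_iff)
    then show ?thesis by (intro disjI2 K_half_I[OF s0])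
  qed
qed

lemma g2:
  assumes "\<sigma> \<in> K_half m lam eta lam0 xi s" "0 \<notin> \<sigma>"
  shows "\<sigma> \<in> K_Delta m lam eta"
proof (cases "\<sigma> = {}")
  case True then show ?thesis by (simp add: K_Delta_def)
next
  case False
  have s: "\<sigma> \<subseteq> {0..m}" using K_half_sub[OF assms(1)] .
  obtain x where x: "\<forall>j\<in>\<sigma>. x \<in> Gf m lam eta lam0 xi j"
    using K_half_E[OF assms(1) False] by blast
  have "\<forall>i\<in>\<sigma>. x \<in> facet_H m lam eta i" using x assms(2) by (auto simp: Gf_def split: if_splits)
  then have "(\<Inter>i\<in>\<sigma>. facet_H m lam eta i) \<noteq> {}" by blast
  moreover have "\<sigma> \<subseteq> {1..m}"
  proof
    fix j assume "j \<in> \<sigma>"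
    have "j \<noteq> 0" using \<open>j \<in> \<sigma>\<close> assms(2) by metis
    moreover have "j \<le> m" using \<open>j \<in> \<sigma>\<close> s by auto
    ultimately show "j \<in> {1..m}" by simp
  qed
  ultimately show ?thesis by (simp add: K_Delta_def)
qed

lemma g4:
  assumes "\<sigma> \<in> K_half m lam eta lam0 xi s" "0 \<in> \<sigma>"
  shows "\<sigma> \<in> K_half m lam eta lam0 xi s'"
proof -
  have s: "\<sigma> \<subseteq> {0..m}" using K_half_sub[OF assms(1)] .
  obtain x where x: "\<forall>j\<in>\<sigma>. x \<in> Gf m lam eta lam0 xi j"
    using K_half_E[OF assms(1)] assms(2) by blast
  have x0: "lam0 \<bullet> x + xi = 0" "x \<in> polyhedron_of m lam eta"
    using x assms(2) by (auto simp: Gf_def)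
  then have "\<forall>j\<in>\<sigma>. x \<in> Gf m lam eta lam0 xi j \<inter> half_poly m lam eta lam0 xi s'"
    using x by (auto simp: half_iff)
  then show ?thesis by (rule K_half_I[OF s])
qed

lemma g3:
  assumes gc: "generic_cut m lam eta lam0 xi"
    and s1: "\<sigma> \<in> K_half m lam eta lam0 xi True" and s2: "\<sigma> \<in> K_half m lam eta lam0 xi False"
  shows "insert 0 \<sigma> \<in> K_half m lam eta lam0 xi s"
proof (cases "\<sigma> = {}")
  case True
  obtain z where z: "lam0 \<bullet> z + xi = 0" "z \<in> polyhedron_of m lam eta"
    using gc unfolding generic_cut_def by blast
  have "{0::nat} \<subseteq> {0..m}" by simp
  moreover have "\<forall>j\<in>{0::nat}. z \<in> Gf m lam eta lam0 xi j \<inter> half_poly m lam eta lam0 xi s"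
    using z by (simp add: Gf_def half_iff)
  ultimately have "{0} \<in> K_half m lam eta lam0 xi s" by (rule K_half_I)
  then show ?thesis using True by simp
next
  case False
  have s: "\<sigma> \<subseteq> {0..m}" using K_half_sub[OF s1] .
  obtain x where x: "\<forall>j\<in>\<sigma>. x \<in> Gf m lam eta lam0 xi j \<inter> half_poly m lam eta lam0 xi True"
    using K_half_E[OF s1 False] by blast
  obtain y where y: "\<forall>j\<in>\<sigma>. y \<in> Gf m lam eta lam0 xi j \<inter> half_poly m lam eta lam0 xi False"
    using K_half_E[OF s2 False] by blast
  obtain i0 where i0: "i0 \<in> \<sigma>" using False by blast
  have xD: "x \<in> polyhedron_of m lam eta" and px: "lam0 \<bullet> x + xi \<ge> 0"
    using x i0 by (auto simp: half_iff)
  have yD: "y \<in> polyhedron_of m lam eta" and py: "lam0 \<bullet> y + xi \<le> 0"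
    using y i0 by (auto simp: half_iff)
  define a where "a = lam0 \<bullet> x + xi"
  define b where "b = lam0 \<bullet> y + xi"
  define t where "t = (if a = 0 then 0 else a / (a - b))"
  have ab: "a \<ge> 0" "b \<le> 0" using px py by (auto simp: a_def b_def)
  have t01: "0 \<le> t" "t \<le> 1" using ab by (auto simp: t_def field_simps)
  define z where "z = (1 - t) *\<^sub>R x + t *\<^sub>R y"
  have "lam0 \<bullet> z + xi = (1 - t) * a + t * b"
    unfolding z_def a_def b_def by (rule aff_comb)
  also have "\<dots> = 0"
  proof (cases "a = 0")
    case True then show ?thesis by (simp add: t_def)
  next
    case False
    then have "a - b \<noteq> 0" using ab by auto
    then show ?thesis using False by (simp add: t_def field_simps)
  qed
  finally have z0: "lam0 \<bullet> z + xi = 0" .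
  have zD: "z \<in> polyhedron_of m lam eta" unfolding z_def by (rule poly_conv[OF xD yD t01])
  have zG: "z \<in> Gf m lam eta lam0 xi j" if "j \<in> insert 0 \<sigma>" for j
  proof (cases "j = 0")
    case True then show ?thesis using z0 zD by (simp add: Gf_def)
  next
    case False
    then have "j \<in> \<sigma>" using that by simp
    then show ?thesis unfolding z_def using x y t01 Gf_conv by blast
  qed
  have A: "\<forall>j\<in>insert 0 \<sigma>. z \<in> Gf m lam eta lam0 xi j \<inter> half_poly m lam eta lam0 xi s"
    using zG z0 zD by (auto simp: half_iff)
  have Bs: "insert 0 \<sigma> \<subseteq> {0..m}" using s by auto
  show ?thesis by (rule K_half_I[OF Bs A])
qed

lemma lemmaA:
  assumes J1: "idl m J1" and J2: "idl m J2"
    and split: "\<And>q. q \<in> JW \<Longrightarrow> \<exists>x. x \<in> J1 \<and> q - x \<in> J2"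
    and sub: "J1 \<subseteq> JW"
    and TW: "TorV r m B JW" and TU: "TorV r m B (J1 \<inter> J2)"
  shows "TorV r m B J1"
  unfolding TorV_def
proof
  let ?I = "aug_ideal r m B" and ?F = "free_mod r m B"
  fix f assume "f \<in> KS r m B J1 \<inter> ideal_times_free ?I ?F"
  then have fF: "f \<in> ?F" and fJ: "present_map f \<in> J1" and fI: "\<forall>a. f a \<in> ?I"
    by (auto simp: KS_def ideal_times_free_def)
  have "f \<in> KS r m B JW \<inter> ideal_times_free ?I ?F"
    using fF fJ fI sub by (auto simp: KS_def ideal_times_free_def)
  then have "f \<in> ideal_times_mod ?I (KS r m B JW)" using TW unfolding TorV_def by blast
  then obtain n c g where ng: "\<forall>k<n. c k \<in> ?I \<and> g k \<in> KS r m B JW" and fe: "f = lc n c g"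
    using IM_E by blast
  have cS: "c k \<in> S_ring r m B" if "k < n" for k using ng that I_sub_S by blast
  have gF: "g k \<in> ?F" if "k < n" for k using ng that by (auto simp: KS_def)
  have "\<forall>k\<in>{..<n}. \<exists>x. x \<in> J1 \<and> present_map (g k) - x \<in> J2"
  proof
    fix k assume "k \<in> {..<n}"
    then have "present_map (g k) \<in> JW" using ng by (auto simp: KS_def)
    then show "\<exists>x. x \<in> J1 \<and> present_map (g k) - x \<in> J2" by (rule split)
  qed
  then have "\<exists>\<alpha>. \<forall>k\<in>{..<n}. \<alpha> k \<in> J1 \<and> present_map (g k) - \<alpha> k \<in> J2" by (rule bchoice)
  then obtain \<alpha> where al0: "\<forall>k\<in>{..<n}. \<alpha> k \<in> J1 \<and> present_map (g k) - \<alpha> k \<in> J2" by blast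
  then have al: "\<forall>k<n. \<alpha> k \<in> J1 \<and> present_map (g k) - \<alpha> k \<in> J2" by simp
  have "\<forall>k\<in>{..<n}. \<exists>h. h \<in> ?F \<and> present_map h = present_map (g k) - \<alpha> k"
  proof
    fix k assume "k \<in> {..<n}"
    then have "present_map (g k) - \<alpha> k \<in> polyring m" using al0 idl_poly[OF J2] by blast
    then show "\<exists>h. h \<in> ?F \<and> present_map h = present_map (g k) - \<alpha> k" by (rule lift_poly)
  qed
  then have "\<exists>h. \<forall>k\<in>{..<n}. h k \<in> ?F \<and> present_map (h k) = present_map (g k) - \<alpha> k" by (rule bchoice)
  then obtain h where hh0: "\<forall>k\<in>{..<n}. h k \<in> ?F \<and> present_map (h k) = present_map (g k) - \<alpha> k" by blast
  then have hh: "\<forall>k<n. h k \<in> ?F \<and> present_map (h k) = present_map (g k) - \<alpha> k" by simp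
  define f1 where "f1 = lc n c (\<lambda>k a. g k a - h k a)"
  define f2 where "f2 = lc n c h"
  have fsum: "f = (\<lambda>a. f1 a + f2 a)"
    unfolding fe f1_def f2_def lc_def by (rule ext) (simp add: sum.distrib[symmetric] algebra_simps)
  have d: "(\<lambda>a. g k a - h k a) \<in> KS r m B J1" if "k < n" for k
    using F_diff[OF gF[OF that], of "h k"] hh al that by (auto simp: KS_def)
  have f1: "f1 \<in> ideal_times_mod ?I (KS r m B J1)"
    unfolding f1_def by (rule IM_I) (use ng d in auto)
  have f2F: "f2 \<in> ?F" unfolding f2_def by (rule lc_F) (use cS hh in auto)
  have pf: "present_map f = (\<Sum>k<n. c k * present_map (g k))"
    unfolding fe by (rule pm_lc) (use gF in auto)
  have pf2: "present_map f2 = (\<Sum>k<n. c k * present_map (h k))"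
    unfolding f2_def by (rule pm_lc) (use hh in auto)
  have cP: "c k \<in> polyring m" if "k < n" for k using S_sub cS that by blast
  have "present_map f2 \<in> J2"
    unfolding pf2 by (rule idl_sum[OF J2]) (use cP hh al in auto)
  moreover have "present_map f2 = present_map f - (\<Sum>k<n. c k * \<alpha> k)"
  proof -
    have "(\<Sum>k<n. c k * present_map (h k)) = (\<Sum>k<n. c k * present_map (g k) - c k * \<alpha> k)"
      by (rule sum.cong[OF refl]) (simp add: hh right_diff_distrib)
    then show ?thesis unfolding pf pf2 by (simp add: sum_subtractf)
  qed
  moreover have "(\<Sum>k<n. c k * \<alpha> k) \<in> J1"
    by (rule idl_sum[OF J1]) (use cP al in auto)
  ultimately have pJ: "present_map f2 \<in> J1 \<inter> J2"
    using idl_diff[OF J1 fJ] by auto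
  have f2I: "\<forall>a. f2 a \<in> ?I"
  proof
    fix a show "f2 a \<in> ?I" unfolding f2_def lc_def
    proof (rule I_sum)
      fix k assume "k \<in> {..<n}"
      then have "c k \<in> ?I" "h k a \<in> S_ring r m B" using ng hh F_S by auto
      then show "c k * h k a \<in> ?I" using I_mult2 by blast
    qed
  qed
  have "f2 \<in> KS r m B (J1 \<inter> J2) \<inter> ideal_times_free ?I ?F"
    using f2F pJ f2I by (auto simp: KS_def ideal_times_free_def)
  then have "f2 \<in> ideal_times_mod ?I (KS r m B (J1 \<inter> J2))" using TU unfolding TorV_def by blast
  then have "f2 \<in> ideal_times_mod ?I (KS r m B J1)"
    by (rule IM_mono[rotated]) (rule KS_mono, blast)
  then show "f \<in> ideal_times_mod ?I (KS r m B J1)"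
    unfolding fsum using f1 IM_add by blast
qed

lemma lemmaB:
  assumes JU: "idl m JU" and JW: "idl m JW" and JD: "idl m JD"
    and sub: "JU \<subseteq> JD"
    and dec: "\<And>q. q \<in> JD \<Longrightarrow> \<exists>u t. u \<in> JU \<and> t \<in> polyring m \<and> q = u + var_x 0 * t"
    and down: "\<And>t. t \<in> polyring m \<Longrightarrow> var_x 0 * t \<in> JU \<Longrightarrow> t \<in> JW"
    and up: "\<And>t. t \<in> JW \<Longrightarrow> var_x 0 * t \<in> JU"
    and TD: "TorV r m B JD" and TW: "TorV r m B JW"
  shows "TorV r m B JU"
  unfolding TorV_def
proof
  let ?I = "aug_ideal r m B" and ?F = "free_mod r m B"
  fix g assume "g \<in> KS r m B JU \<inter> ideal_times_free ?I ?F"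
  then have gF: "g \<in> ?F" and gJ: "present_map g \<in> JU" and gI: "\<forall>a. g a \<in> ?I"
    by (auto simp: KS_def ideal_times_free_def)
  have "g \<in> KS r m B JD \<inter> ideal_times_free ?I ?F"
    using gF gJ gI sub by (auto simp: KS_def ideal_times_free_def)
  then have "g \<in> ideal_times_mod ?I (KS r m B JD)" using TD unfolding TorV_def by blast
  then obtain n c d where nd: "\<forall>k<n. c k \<in> ?I \<and> d k \<in> KS r m B JD" and ge: "g = lc n c d"
    using IM_E by blast
  have cS: "c k \<in> S_ring r m B" if "k < n" for k using nd that I_sub_S by blast
  have cP: "c k \<in> polyring m" if "k < n" for k using S_sub cS that by blast
  have dF: "d k \<in> ?F" if "k < n" for k using nd that by (auto simp: KS_def)
  have "\<forall>k\<in>{..<n}. \<exists>ut. fst ut \<in> JU \<and> snd ut \<in> polyring m \<and> present_map (d k) = fst ut + var_x 0 * snd ut"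
  proof
    fix k assume "k \<in> {..<n}"
    then have "present_map (d k) \<in> JD" using nd by (auto simp: KS_def)
    then obtain u t where "u \<in> JU \<and> t \<in> polyring m \<and> present_map (d k) = u + var_x 0 * t"
      using dec by blast
    then show "\<exists>ut. fst ut \<in> JU \<and> snd ut \<in> polyring m \<and> present_map (d k) = fst ut + var_x 0 * snd ut"
      by (intro exI[of _ "(u, t)"]) simp
  qed
  then have "\<exists>ut. \<forall>k\<in>{..<n}. fst (ut k) \<in> JU \<and> snd (ut k) \<in> polyring m \<and> present_map (d k) = fst (ut k) + var_x 0 * snd (ut k)"
    by (rule bchoice)
  then obtain ut where ut0: "\<forall>k\<in>{..<n}. fst (ut k) \<in> JU \<and> snd (ut k) \<in> polyring m \<and> present_map (d k) = fst (ut k) + var_x 0 * snd (ut k)"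
    by blast
  define u where "u k = fst (ut k)" for k
  define t where "t k = snd (ut k)" for k
  have ut: "\<forall>k<n. u k \<in> JU \<and> t k \<in> polyring m \<and> present_map (d k) = u k + var_x 0 * t k"
    using ut0 by (simp add: u_def t_def)
  have "\<forall>k\<in>{..<n}. \<exists>h. h \<in> ?F \<and> present_map h = t k"
  proof
    fix k assume "k \<in> {..<n}"
    then have "t k \<in> polyring m" using ut by simp
    then show "\<exists>h. h \<in> ?F \<and> present_map h = t k" by (rule lift_poly)
  qed
  then have "\<exists>h. \<forall>k\<in>{..<n}. h k \<in> ?F \<and> present_map (h k) = t k" by (rule bchoice)
  then obtain h where hh0: "\<forall>k\<in>{..<n}. h k \<in> ?F \<and> present_map (h k) = t k" by blast
  then have hh: "\<forall>k<n. h k \<in> ?F \<and> present_map (h k) = t k" by simp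
  have shh: "sh (h k) \<in> ?F \<and> present_map (sh (h k)) = var_x 0 * t k" if "k < n" for k
    using sh_F[of "h k"] hh that by auto
  define g1 where "g1 = lc n c (\<lambda>k a. d k a - sh (h k) a)"
  define H where "H = lc n c h"
  have gsum: "g = (\<lambda>a. g1 a + sh H a)"
    unfolding ge g1_def H_def sh_lc unfolding lc_def
    by (rule ext) (simp add: sum.distrib[symmetric] algebra_simps)
  have dd: "(\<lambda>a. d k a - sh (h k) a) \<in> KS r m B JU" if "k < n" for k
    using F_diff[OF dF[OF that], of "sh (h k)"] shh[OF that] ut that by (auto simp: KS_def)
  have g1: "g1 \<in> ideal_times_mod ?I (KS r m B JU)"
    unfolding g1_def by (rule IM_I) (use nd dd in auto)
  have HF: "H \<in> ?F" unfolding H_def by (rule lc_F) (use cS hh in auto)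
  have pg: "present_map g = (\<Sum>k<n. c k * present_map (d k))"
    unfolding ge by (rule pm_lc) (use dF in auto)
  have pH: "present_map H = (\<Sum>k<n. c k * t k)"
    unfolding H_def using pm_lc[of n h r m B c] hh by simp
  have "present_map (sh H) = var_x 0 * present_map H" using sh_F[OF HF] by simp
  also have "\<dots> = present_map g - (\<Sum>k<n. c k * u k)"
    unfolding pg pH using ut by (simp add: sum_subtractf[symmetric] sum_distrib_left algebra_simps)
  finally have "var_x 0 * present_map H = present_map g - (\<Sum>k<n. c k * u k)"
    using sh_F[OF HF] by simp
  moreover have "(\<Sum>k<n. c k * u k) \<in> JU"
    by (rule idl_sum[OF JU]) (use cP ut in auto)
  ultimately have "var_x 0 * present_map H \<in> JU" using idl_diff[OF JU gJ] by simp
  then have pHW: "present_map H \<in> JW" using down pm_poly[OF HF] by blast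
  have HI: "\<forall>a. H a \<in> ?I"
  proof
    fix a show "H a \<in> ?I" unfolding H_def lc_def
    proof (rule I_sum)
      fix k assume "k \<in> {..<n}"
      then have "c k \<in> ?I" "h k a \<in> S_ring r m B" using nd hh F_S by auto
      then show "c k * h k a \<in> ?I" using I_mult2 by blast
    qed
  qed
  have "H \<in> KS r m B JW \<inter> ideal_times_free ?I ?F"
    using HF pHW HI by (auto simp: KS_def ideal_times_free_def)
  then have "H \<in> ideal_times_mod ?I (KS r m B JW)" using TW unfolding TorV_def by blast
  then obtain n' c' w where nw: "\<forall>k<n'. c' k \<in> ?I \<and> w k \<in> KS r m B JW" and He: "H = lc n' c' w"
    using IM_E by blast
  have "sh (w k) \<in> KS r m B JU" if "k < n'" for k
  proof -
    have wF: "w k \<in> ?F" and wJ: "present_map (w k) \<in> JW" using nw that by (auto simp: KS_def)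
    then show ?thesis using sh_F[OF wF] up[OF wJ] by (simp add: KS_def)
  qed
  then have "sh H \<in> ideal_times_mod ?I (KS r m B JU)"
    unfolding He sh_lc by (intro IM_I) (use nw in auto)
  then show "g \<in> ideal_times_mod ?I (KS r m B JU)"
    unfolding gsum using g1 IM_add by blast
qed


definition restr :: "((nat \<Rightarrow>\<^sub>0 nat) \<Rightarrow> bool) \<Rightarrow> zpoly \<Rightarrow> zpoly" where
  "restr P q = (\<Sum>a\<in>{a\<in>Poly_Mapping.keys q. P a}. Poly_Mapping.single a (Poly_Mapping.lookup q a))"

lemma lookup_restr: "Poly_Mapping.lookup (restr P q) b = (if P b then Poly_Mapping.lookup q b else 0)"
proof -
  have "Poly_Mapping.lookup (restr P q) b =
        (\<Sum>a\<in>{a\<in>Poly_Mapping.keys q. P a}. if a = b then Poly_Mapping.lookup q a else 0)"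
    unfolding restr_def lookup_sum by (rule sum.cong) (auto simp: lookup_single when_def)
  also have "\<dots> = (if P b then Poly_Mapping.lookup q b else 0)"
    by (simp add: sum.delta' in_keys_iff)
  finally show ?thesis .
qed

lemma keys_restr: "Poly_Mapping.keys (restr P q) = {a\<in>Poly_Mapping.keys q. P a}"
  by (auto simp: in_keys_iff lookup_restr split: if_splits)

lemma restr_split: "q = restr P q + restr (\<lambda>a. \<not> P a) q"
  by (rule poly_mapping_eqI) (simp add: lookup_add lookup_restr)

lemma restr_Jm:
  assumes "q \<in> polyring m" "\<And>a. a \<in> Poly_Mapping.keys q \<Longrightarrow> P a \<Longrightarrow> Poly_Mapping.keys a \<notin> L"
  shows "restr P q \<in> Jm m L"
  using assms unfolding Jm_def polyring_def by (auto simp: keys_restr)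

lemma poly_expand: "q = (\<Sum>a\<in>Poly_Mapping.keys q. Poly_Mapping.single a (Poly_Mapping.lookup q a))"
proof (rule poly_mapping_eqI)
  fix j
  show "Poly_Mapping.lookup q j = Poly_Mapping.lookup (\<Sum>a\<in>Poly_Mapping.keys q. Poly_Mapping.single a (Poly_Mapping.lookup q a)) j"
    by (simp add: lookup_sum lookup_single when_def in_keys_iff)
qed

lemma keys_monom_mult:
  "Poly_Mapping.keys (monom_x e * t) = (\<lambda>b. e + b) ` Poly_Mapping.keys t"
proof
  show "Poly_Mapping.keys (monom_x e * t) \<subseteq> (\<lambda>b. e + b) ` Poly_Mapping.keys t"
    using keys_mult[of "monom_x e" t] by (auto simp: keys_monom)
next
  have ex: "monom_x e * t = (\<Sum>b\<in>Poly_Mapping.keys t. Poly_Mapping.single (e + b) (Poly_Mapping.lookup t b))"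
    by (subst poly_expand[of t]) (simp add: sum_distrib_left monom_x_def mult_single)
  show "(\<lambda>b. e + b) ` Poly_Mapping.keys t \<subseteq> Poly_Mapping.keys (monom_x e * t)"
  proof
    fix c assume "c \<in> (\<lambda>b. e + b) ` Poly_Mapping.keys t"
    then obtain b0 where b0: "c = e + b0" "b0 \<in> Poly_Mapping.keys t" by blast
    have "Poly_Mapping.lookup (monom_x e * t) c =
          (\<Sum>b\<in>Poly_Mapping.keys t. if b = b0 then Poly_Mapping.lookup t b else 0)"
      unfolding ex lookup_sum b0(1) by (rule sum.cong) (auto simp: lookup_single when_def)
    also have "\<dots> = Poly_Mapping.lookup t b0" using b0(2) by simp
    finally show "c \<in> Poly_Mapping.keys (monom_x e * t)" using b0(2) by (simp add: in_keys_iff)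
  qed
qed

lemma keys_e0_add: "Poly_Mapping.keys (e0 + b) = insert 0 (Poly_Mapping.keys b)"
  by (simp add: keys_add_nat e0_def)

lemma var0_monom: "var_x 0 = monom_x e0"
  by (simp add: var_x_def e0_def)

theorem lemma4p12:
  fixes m r :: nat
    and lam :: "nat \<Rightarrow> real^'n" and eta :: "nat \<Rightarrow> real"
    and lam0 :: "real^'n" and xi :: real
    and B :: "nat \<Rightarrow> nat \<Rightarrow> int"
  assumes "simple_polytope_data m lam eta"
    and "generic_cut m lam eta lam0 xi"
    and "full_row_rank r m B"
    and "Tor1_SR_vanishes r m B (K_half m lam eta lam0 xi True \<inter> K_half m lam eta lam0 xi False)"
    and "Tor1_SR_vanishes r m B (K_Delta m lam eta)"
  shows "Tor1_SR_vanishes r m B (K_half m lam eta lam0 xi True)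
       \<and> Tor1_SR_vanishes r m B (K_half m lam eta lam0 xi False)"
proof -
  define L1 where "L1 = K_half m lam eta lam0 xi True"
  define L2 where "L2 = K_half m lam eta lam0 xi False"
  define LD where "LD = K_Delta m lam eta"
  have gc: "generic_cut m lam eta lam0 xi" by fact
  have d1: "downclosed L1" unfolding L1_def by (rule downclosed_half)
  have d2: "downclosed L2" unfolding L2_def by (rule downclosed_half)
  have dD: "downclosed LD" unfolding LD_def by (rule downclosed_Delta)
  have dW: "downclosed (L1 \<inter> L2)" by (rule downclosed_Int[OF d1 d2])
  have i1: "idl m (Jm m L1)" by (rule idl_Jm[OF d1])
  have i2: "idl m (Jm m L2)" by (rule idl_Jm[OF d2])
  have iD: "idl m (Jm m LD)" by (rule idl_Jm[OF dD])
  have iW: "idl m (Jm m (L1 \<inter> L2))" by (rule idl_Jm[OF dW])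
  have iU: "idl m (Jm m L1 \<inter> Jm m L2)" by (rule idl_int[OF i1 i2])
  have TW: "TorV r m B (Jm m (L1 \<inter> L2))"
    using assms(4) unfolding Tor1_TorV L1_def L2_def SR_eq_Jm[OF dW[unfolded L1_def L2_def]] .
  have TD: "TorV r m B (Jm m LD)"
    using assms(5) unfolding Tor1_TorV LD_def SR_eq_Jm[OF dD[unfolded LD_def]] .
  have sub: "Jm m L1 \<inter> Jm m L2 \<subseteq> Jm m LD"
  proof
    fix p assume p: "p \<in> Jm m L1 \<inter> Jm m L2"
    have "Poly_Mapping.keys a \<notin> LD" if a: "a \<in> Poly_Mapping.keys p" for a
    proof
      assume "Poly_Mapping.keys a \<in> LD"
      then have "Poly_Mapping.keys a \<in> L1 \<or> Poly_Mapping.keys a \<in> L2"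
        unfolding LD_def L1_def L2_def by (rule g1)
      then show False using p a unfolding Jm_def by blast
    qed
    then show "p \<in> Jm m LD" using p unfolding Jm_def by blast
  qed
  have dec: "\<exists>u t. u \<in> Jm m L1 \<inter> Jm m L2 \<and> t \<in> polyring m \<and> q = u + var_x 0 * t"
    if q: "q \<in> Jm m LD" for q
  proof -
    define P where "P a = (Poly_Mapping.lookup a 0 = 0)" for a :: "nat \<Rightarrow>\<^sub>0 nat"
    define A where "A = {a\<in>Poly_Mapping.keys q. \<not> P a}"
    define t where "t = (\<Sum>a\<in>A. Poly_Mapping.single (a - e0) (Poly_Mapping.lookup q a))"
    have qp: "q \<in> polyring m" using q Jm_poly by blast
    have u: "restr P q \<in> Jm m L1 \<inter> Jm m L2"
    proof -
      have "Poly_Mapping.keys a \<notin> L1 \<and> Poly_Mapping.keys a \<notin> L2"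
        if a: "a \<in> Poly_Mapping.keys q" "P a" for a
      proof -
        have nD: "Poly_Mapping.keys a \<notin> LD" using q a unfolding Jm_def by blast
        have n0: "0 \<notin> Poly_Mapping.keys a" using a(2) by (simp add: P_def in_keys_iff)
        show ?thesis using g2[OF _ n0, of m lam eta lam0 xi True] g2[OF _ n0, of m lam eta lam0 xi False] nD
          unfolding L1_def L2_def LD_def by blast
      qed
      then show ?thesis using restr_Jm[OF qp] by blast
    qed
    have tp: "t \<in> polyring m"
      unfolding t_def
    proof (rule polyring_sum)
      fix a assume "a \<in> A"
      then have "a \<in> monos_m m" using qp by (auto simp: A_def polyring_def)
      moreover have "Poly_Mapping.keys (a - e0) \<subseteq> Poly_Mapping.keys a"
        by (auto simp: in_keys_iff lookup_minus)
      ultimately have "a - e0 \<in> monos_m m" by (auto simp: monos_m_def)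
      then show "Poly_Mapping.single (a - e0) (Poly_Mapping.lookup q a) \<in> polyring m"
        by (simp add: polyring_def)
    qed
    have "var_x 0 * t = (\<Sum>a\<in>A. Poly_Mapping.single (e0 + (a - e0)) (Poly_Mapping.lookup q a))"
      unfolding t_def var0_monom by (simp add: sum_distrib_left monom_x_def mult_single)
    also have "\<dots> = (\<Sum>a\<in>A. Poly_Mapping.single a (Poly_Mapping.lookup q a))"
    proof (rule sum.cong[OF refl])
      fix a assume "a \<in> A"
      then have "0 < Poly_Mapping.lookup a 0" by (simp add: A_def P_def)
      then have "e0 + (a - e0) = a" using e0_split by (simp add: add.commute)
      then show "Poly_Mapping.single (e0 + (a - e0)) (Poly_Mapping.lookup q a) =
                 Poly_Mapping.single a (Poly_Mapping.lookup q a)" by simp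
    qed
    also have "\<dots> = restr (\<lambda>a. \<not> P a) q" by (simp add: restr_def A_def)
    finally have "q = restr P q + var_x 0 * t" using restr_split[of q P] by simp
    then show ?thesis using u tp by blast
  qed
  have down: "t \<in> Jm m (L1 \<inter> L2)" if tp: "t \<in> polyring m" and tU: "var_x 0 * t \<in> Jm m L1 \<inter> Jm m L2" for t
  proof -
    have "Poly_Mapping.keys b \<notin> L1 \<inter> L2" if b: "b \<in> Poly_Mapping.keys t" for b
    proof
      assume bW: "Poly_Mapping.keys b \<in> L1 \<inter> L2"
      have "insert 0 (Poly_Mapping.keys b) \<in> L1"
        using g3[OF gc, of "Poly_Mapping.keys b" True] bW unfolding L1_def L2_def by blast
      moreover have "e0 + b \<in> Poly_Mapping.keys (var_x 0 * t)"
        unfolding var0_monom keys_monom_mult using b by blast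
      ultimately show False using tU keys_e0_add[of b] unfolding Jm_def by auto
    qed
    then show ?thesis using tp unfolding Jm_def by blast
  qed
  have up: "var_x 0 * t \<in> Jm m L1 \<inter> Jm m L2" if tW: "t \<in> Jm m (L1 \<inter> L2)" for t
  proof -
    have tp: "t \<in> polyring m" using tW Jm_poly by blast
    have xp: "var_x 0 * t \<in> polyring m" by (rule polyring_mult[OF var_x_poly tp]) simp
    have "Poly_Mapping.keys a \<notin> L1 \<and> Poly_Mapping.keys a \<notin> L2"
      if a: "a \<in> Poly_Mapping.keys (var_x 0 * t)" for a
    proof -
      obtain b where b: "a = e0 + b" "b \<in> Poly_Mapping.keys t"
        using a unfolding var0_monom keys_monom_mult by blast
      have ka: "Poly_Mapping.keys a = insert 0 (Poly_Mapping.keys b)" using b(1) keys_e0_add by simp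
      have nb: "Poly_Mapping.keys b \<notin> L1 \<inter> L2" using tW b(2) unfolding Jm_def by blast
      have "Poly_Mapping.keys a \<notin> L1 \<inter> L2"
      proof
        assume "Poly_Mapping.keys a \<in> L1 \<inter> L2"
        then have "Poly_Mapping.keys b \<in> L1 \<inter> L2" using dW ka unfolding downclosed_def by blast
        then show False using nb by blast
      qed
      moreover have "Poly_Mapping.keys a \<in> L1 \<longleftrightarrow> Poly_Mapping.keys a \<in> L2"
        using g4[of "Poly_Mapping.keys a" m lam eta lam0 xi True False]
              g4[of "Poly_Mapping.keys a" m lam eta lam0 xi False True] ka
        unfolding L1_def L2_def by blast
      ultimately show ?thesis by blast
    qed
    then show ?thesis using xp unfolding Jm_def by blast
  qed
  have TU: "TorV r m B (Jm m L1 \<inter> Jm m L2)"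
    by (rule lemmaB[OF iU iW iD sub dec down up TD TW])
  have split1: "\<exists>x. x \<in> Jm m L1 \<and> q - x \<in> Jm m L2" if q: "q \<in> Jm m (L1 \<inter> L2)" for q
  proof -
    have qp: "q \<in> polyring m" using q Jm_poly by blast
    define P where "P a = (Poly_Mapping.keys a \<notin> L1)" for a :: "nat \<Rightarrow>\<^sub>0 nat"
    have "restr P q \<in> Jm m L1" by (rule restr_Jm[OF qp]) (simp add: P_def)
    moreover have "restr (\<lambda>a. \<not> P a) q \<in> Jm m L2"
      by (rule restr_Jm[OF qp]) (use q in \<open>auto simp: P_def Jm_def\<close>)
    moreover have "q - restr P q = restr (\<lambda>a. \<not> P a) q"
      using restr_split[of q P] by (simp add: algebra_simps)
    ultimately show ?thesis by metis
  qed
  have split2: "\<exists>x. x \<in> Jm m L2 \<and> q - x \<in> Jm m L1" if q: "q \<in> Jm m (L1 \<inter> L2)" for q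
  proof -
    have qp: "q \<in> polyring m" using q Jm_poly by blast
    define P where "P a = (Poly_Mapping.keys a \<notin> L2)" for a :: "nat \<Rightarrow>\<^sub>0 nat"
    have "restr P q \<in> Jm m L2" by (rule restr_Jm[OF qp]) (simp add: P_def)
    moreover have "restr (\<lambda>a. \<not> P a) q \<in> Jm m L1"
      by (rule restr_Jm[OF qp]) (use q in \<open>auto simp: P_def Jm_def\<close>)
    moreover have "q - restr P q = restr (\<lambda>a. \<not> P a) q"
      using restr_split[of q P] by (simp add: algebra_simps)
    ultimately show ?thesis by metis
  qed
  have s1: "Jm m L1 \<subseteq> Jm m (L1 \<inter> L2)" unfolding Jm_def by blast
  have s2: "Jm m L2 \<subseteq> Jm m (L1 \<inter> L2)" unfolding Jm_def by blast
  have T1: "TorV r m B (Jm m L1)"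
    by (rule lemmaA[OF i1 i2 split1 s1 TW TU])
  have TU': "TorV r m B (Jm m L2 \<inter> Jm m L1)" using TU by (simp add: Int_commute)
  have T2: "TorV r m B (Jm m L2)"
    by (rule lemmaA[OF i2 i1 split2 s2 TW TU'])
  show ?thesis
    using T1 T2 unfolding Tor1_TorV SR_eq_Jm[OF d1[unfolded L1_def]] SR_eq_Jm[OF d2[unfolded L2_def]]
      L1_def L2_def by blast
qed

end
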